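(* Let $\mathcal S=(E,\mathcal I)$ and $\mathcal S'=(E',\mathcal I')$ be $r$-covering systems with $|E|=|E'|$ that are similar, i.e., there is a bijection $\psi:\mathcal I\to\mathcal I'$ with $|\psi(X)|=|X|$ for all $X\in\mathcal I$. If $\texttt{a}$ is an activity of $\mathcal S$ and $\texttt{a}'$ is an activity of $\mathcal S'$, then their activity vectors are equal.
   Context: For finite sets $X\subseteq Y$, write $[X,Y]=\{Z: X\subseteq Z\subseteq Y\}$. An $r$-covering system is a pair $\mathcal S=(E,\mathcal I)$ where $E$ is a finite set and $\mathcal I$ is a collection of subsets of $E$, each of cardinality at most $r$, such that for every $I\in\mathcal I$ there exists $B\in\mathcal I$ with $|B|=r$ and $[I,B]\subseteq\mathcal I$. Members of $\mathcal I$ of cardinality $r$ are called bases, and $\mathcal B$ denotes the set of bases. An activity of $\mathcal S$ is a function $\texttt{a}:\mathcal B\to 2^E$ such that for every $B\in\mathcal B$, $\texttt{a}(B)\subseteq B$ and $[B\setminus\texttt{a}(B),B]\subseteq\mathcal I$, and such that every $I\in\mathcal I$ belongs to $[B\setminus\texttt{a}(B),B]$ for exactly one $B\in\mathcal B$. The activity vector is $(a_0,\dots,a_r)$ where $a_i$ is the number of bases $B$ with $|\texttt{a}(B)|=i$. *)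

theory Defs
  imports Main
begin

definition interval :: "'a set \<Rightarrow> 'a set \<Rightarrow> 'a set set" where
  "interval X Y = {Z. X \<subseteq> Z \<and> Z \<subseteq> Y}"

definition covering_system :: "nat \<Rightarrow> 'a set \<Rightarrow> 'a set set \<Rightarrow> bool" where
  "covering_system r E \<I> \<longleftrightarrow> finite E \<and>
     (\<forall>I\<in>\<I>. I \<subseteq> E \<and> card I \<le> r) \<and>
     (\<forall>I\<in>\<I>. \<exists>B\<in>\<I>. card B = r \<and> interval I B \<subseteq> \<I>)"

definition bases :: "nat \<Rightarrow> 'a set set \<Rightarrow> 'a set set" where
  "bases r \<I> = {B \<in> \<I>. card B = r}"

definition is_activity :: "nat \<Rightarrow> 'a set set \<Rightarrow> ('a set \<Rightarrow> 'a set) \<Rightarrow> bool" where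
  "is_activity r \<I> a \<longleftrightarrow>
     (\<forall>B\<in>bases r \<I>. a B \<subseteq> B \<and> interval (B - a B) B \<subseteq> \<I>) \<and>
     (\<forall>I\<in>\<I>. \<exists>!B. B \<in> bases r \<I> \<and> I \<in> interval (B - a B) B)"

definition activity_vector :: "nat \<Rightarrow> 'a set set \<Rightarrow> ('a set \<Rightarrow> 'a set) \<Rightarrow> nat list" where
  "activity_vector r \<I> a = map (\<lambda>i. card {B \<in> bases r \<I>. card (a B) = i}) [0..<Suc r]"

definition similar :: "'a set set \<Rightarrow> 'b set set \<Rightarrow> bool" where
  "similar \<I> \<I>' \<longleftrightarrow> (\<exists>\<psi>. bij_betw \<psi> \<I> \<I>' \<and> (\<forall>X\<in>\<I>. card (\<psi> X) = card X))"

end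

theory Submission
  imports Defs
begin

lemma fin_I: "covering_system r E \<I> \<Longrightarrow> finite \<I>"
  unfolding covering_system_def
  by (rule finite_subset[of _ "Pow E"]) auto

lemma fin_elem: "covering_system r E \<I> \<Longrightarrow> X \<in> \<I> \<Longrightarrow> finite X"
  unfolding covering_system_def by (auto intro: finite_subset)

lemma count_interval:
  assumes fB: "finite B" and cB: "card B = r" and aB: "A \<subseteq> B" and k: "k \<le> r"
  shows "card {X \<in> interval (B - A) B. card X = k} = card A choose (r - k)"
proof -
  have fA: "finite A" using aB fB finite_subset by blast
  have "bij_betw (\<lambda>X. B - X) {X \<in> interval (B - A) B. card X = k} {S. S \<subseteq> A \<and> card S = r - k}"
  proof (rule bij_betw_byWitness[where f'="\<lambda>S. B - S"])
    show "\<forall>X\<in>{X \<in> interval (B - A) B. card X = k}. B - (B - X) = X"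
      by (auto simp: interval_def)
    show "\<forall>S\<in>{S. S \<subseteq> A \<and> card S = r - k}. B - (B - S) = S" using aB by auto
    show "(\<lambda>X. B - X) ` {X \<in> interval (B - A) B. card X = k} \<subseteq> {S. S \<subseteq> A \<and> card S = r - k}"
    proof (rule image_subsetI)
      fix X assume "X \<in> {X \<in> interval (B - A) B. card X = k}"
      hence X: "X \<in> interval (B - A) B" "card X = k" by auto
      hence "X \<subseteq> B" "B - A \<subseteq> X" by (auto simp: interval_def)
      moreover have "card (B - X) = card B - card X" using \<open>X \<subseteq> B\<close> fB
        using card_Diff_subset[of X B] finite_subset[OF \<open>X \<subseteq> B\<close> fB] by simp
      ultimately show "B - X \<in> {S. S \<subseteq> A \<and> card S = r - k}" using X cB by auto
    qed
    show "(\<lambda>S. B - S) ` {S. S \<subseteq> A \<and> card S = r - k} \<subseteq> {X \<in> interval (B - A) B. card X = k}"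
    proof (rule image_subsetI)
      fix S assume "S \<in> {S. S \<subseteq> A \<and> card S = r - k}"
      hence S: "S \<subseteq> A" "card S = r - k" by auto
      have "card (B - S) = card B - card S" using S aB fB
        using card_Diff_subset[of S B] finite_subset[of S B] by auto
      thus "B - S \<in> {X \<in> interval (B - A) B. card X = k}"
        using S cB k by (auto simp: interval_def)
    qed
  qed
  hence "card {X \<in> interval (B - A) B. card X = k} = card {S. S \<subseteq> A \<and> card S = r - k}"
    by (rule bij_betw_same_card)
  also have "\<dots> = card A choose (r - k)" using n_subsets[OF fA] by simp
  finally show ?thesis .
qed

lemma fvec:
  assumes cs: "covering_system r E \<I>" and act: "is_activity r \<I> a" and k: "k \<le> r"
  shows "card {X \<in> \<I>. card X = k} =
    (\<Sum>i\<in>{..r}. card {B \<in> bases r \<I>. card (a B) = i} * (i choose (r - k)))"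
proof -
  have fI: "finite \<I>" using fin_I[OF cs] .
  have fb: "finite (bases r \<I>)" using fI unfolding bases_def by simp
  have bI: "bases r \<I> \<subseteq> \<I>" unfolding bases_def by auto
  have A1: "\<forall>B\<in>bases r \<I>. a B \<subseteq> B \<and> interval (B - a B) B \<subseteq> \<I>"
   and A2: "\<forall>I\<in>\<I>. \<exists>!B. B \<in> bases r \<I> \<and> I \<in> interval (B - a B) B"
    using act unfolding is_activity_def by auto
  have U: "{X \<in> \<I>. card X = k} = (\<Union>B\<in>bases r \<I>. {X \<in> interval (B - a B) B. card X = k})"
  proof
    show "{X \<in> \<I>. card X = k} \<subseteq> (\<Union>B\<in>bases r \<I>. {X \<in> interval (B - a B) B. card X = k})"
    proof
      fix X assume X: "X \<in> {X \<in> \<I>. card X = k}"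
      then obtain B where "B \<in> bases r \<I>" "X \<in> interval (B - a B) B" using A2 by auto
      thus "X \<in> (\<Union>B\<in>bases r \<I>. {X \<in> interval (B - a B) B. card X = k})" using X by auto
    qed
    show "(\<Union>B\<in>bases r \<I>. {X \<in> interval (B - a B) B. card X = k}) \<subseteq> {X \<in> \<I>. card X = k}"
      using A1 by auto
  qed
  have "card {X \<in> \<I>. card X = k} = (\<Sum>B\<in>bases r \<I>. card {X \<in> interval (B - a B) B. card X = k})"
    unfolding U
  proof (rule card_UN_disjoint[OF fb])
    show "\<forall>B\<in>bases r \<I>. finite {X \<in> interval (B - a B) B. card X = k}"
    proof
      fix B assume "B \<in> bases r \<I>"
      hence "{X \<in> interval (B - a B) B. card X = k} \<subseteq> \<I>" using A1 by blast
      thus "finite {X \<in> interval (B - a B) B. card X = k}" using fI finite_subset by blast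
    qed
    show "\<forall>B\<in>bases r \<I>. \<forall>B'\<in>bases r \<I>. B \<noteq> B' \<longrightarrow>
      {X \<in> interval (B - a B) B. card X = k} \<inter> {X \<in> interval (B' - a B') B'. card X = k} = {}"
    proof (intro ballI impI)
      fix B B' assume B: "B \<in> bases r \<I>" "B' \<in> bases r \<I>" "B \<noteq> B'"
      show "{X \<in> interval (B - a B) B. card X = k} \<inter> {X \<in> interval (B' - a B') B'. card X = k} = {}"
      proof (rule ccontr)
        assume "\<not> ?thesis"
        then obtain X where X: "X \<in> interval (B - a B) B" "X \<in> interval (B' - a B') B'" by blast
        hence "X \<in> \<I>" using A1 B by blast
        from bspec[OF A2 \<open>X \<in> \<I>\<close>] have "\<exists>!B. B \<in> bases r \<I> \<and> X \<in> interval (B - a B) B" .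
        thus False using X B by auto
      qed
    qed
  qed
  also have "\<dots> = (\<Sum>B\<in>bases r \<I>. card (a B) choose (r - k))"
  proof (rule sum.cong[OF refl])
    fix B assume B: "B \<in> bases r \<I>"
    hence "finite B" "card B = r" using fin_elem[OF cs] bI unfolding bases_def by auto
    thus "card {X \<in> interval (B - a B) B. card X = k} = card (a B) choose (r - k)"
      using count_interval[of B r "a B" k] A1 B k by simp
  qed
  also have "\<dots> = (\<Sum>i\<in>{..r}. \<Sum>B\<in>{B \<in> bases r \<I>. card (a B) = i}. card (a B) choose (r - k))"
  proof (rule sum.group[symmetric, OF fb])
    show "finite {..r}" by simp
    show "(\<lambda>B. card (a B)) ` bases r \<I> \<subseteq> {..r}"
    proof clarsimp
      fix B assume B: "B \<in> bases r \<I>"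
      hence "finite B" "card B = r" using fin_elem[OF cs] bI unfolding bases_def by auto
      thus "card (a B) \<le> r" using A1 B card_mono[OF \<open>finite B\<close>] by auto
    qed
  qed
  also have "\<dots> = (\<Sum>i\<in>{..r}. card {B \<in> bases r \<I>. card (a B) = i} * (i choose (r - k)))"
    by (rule sum.cong[OF refl]) simp
  finally show ?thesis .
qed

lemma triangular:
  fixes x y :: "nat \<Rightarrow> nat"
  assumes H: "\<And>j. j \<le> r \<Longrightarrow> (\<Sum>i\<in>{..r}. x i * (i choose j)) = (\<Sum>i\<in>{..r}. y i * (i choose j))"
  shows "\<forall>j. j \<le> r \<longrightarrow> x j = y j"
proof -
  have split: "(\<Sum>i\<in>{..r}. z i * (i choose j)) = z j + (\<Sum>i\<in>{Suc j..r}. z i * (i choose j))"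
    if "j \<le> r" for z :: "nat \<Rightarrow> nat" and j
  proof -
    have "{..r} = {..<j} \<union> {j..r}" using that by auto
    hence "(\<Sum>i\<in>{..r}. z i * (i choose j)) = (\<Sum>i\<in>{..<j}. z i * (i choose j)) + (\<Sum>i\<in>{j..r}. z i * (i choose j))"
      by (simp add: sum.union_disjoint ivl_disj_int)
    also have "(\<Sum>i\<in>{..<j}. z i * (i choose j)) = 0" by simp
    also have "{j..r} = insert j {Suc j..r}" using that by auto
    finally show ?thesis by simp
  qed
  have "\<forall>j. j \<le> r \<longrightarrow> r - j = d \<longrightarrow> x j = y j" for d
  proof (induction d rule: less_induct)
    case (less d)
    show ?case
    proof (intro allI impI)
      fix j assume j: "j \<le> r" "r - j = d"
      have eq: "(\<Sum>i\<in>{Suc j..r}. x i * (i choose j)) = (\<Sum>i\<in>{Suc j..r}. y i * (i choose j))"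
      proof (rule sum.cong[OF refl])
        fix i assume "i \<in> {Suc j..r}"
        hence "r - i < d" "i \<le> r" using j by auto
        thus "x i * (i choose j) = y i * (i choose j)" using less by auto
      qed
      show "x j = y j" using H[OF j(1)] split[OF j(1), of x] split[OF j(1), of y] eq by simp
    qed
  qed
  thus ?thesis by blast
qed

theorem mainTheorem5:
  fixes E :: "'a set" and \<I> :: "'a set set" and E' :: "'b set" and \<I>' :: "'b set set"
    and a :: "'a set \<Rightarrow> 'a set" and a' :: "'b set \<Rightarrow> 'b set" and r :: nat
  assumes "covering_system r E \<I>" and "covering_system r E' \<I>'"
    and "card E = card E'"
    and "similar \<I> \<I>'"
    and "is_activity r \<I> a" and "is_activity r \<I>' a'"
  shows "activity_vector r \<I> a = activity_vector r \<I>' a'"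
proof -
  obtain \<psi> where psi: "bij_betw \<psi> \<I> \<I>'" "\<forall>X\<in>\<I>. card (\<psi> X) = card X"
    using assms(4) unfolding similar_def by blast
  have injI: "inj_on \<psi> \<I>" and imI: "\<psi> ` \<I> = \<I>'" using psi(1) unfolding bij_betw_def by auto
  have F: "card {X \<in> \<I>. card X = k} = card {X \<in> \<I>'. card X = k}" for k
  proof -
    have inj: "inj_on \<psi> {X \<in> \<I>. card X = k}"
      by (rule inj_on_subset[OF injI]) auto
    have im: "\<psi> ` {X \<in> \<I>. card X = k} = {X \<in> \<I>'. card X = k}"
    proof
      show "\<psi> ` {X \<in> \<I>. card X = k} \<subseteq> {X \<in> \<I>'. card X = k}"
      proof (rule image_subsetI)
        fix X assume "X \<in> {X \<in> \<I>. card X = k}"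
        thus "\<psi> X \<in> {X \<in> \<I>'. card X = k}" using imI psi(2) by auto
      qed
      show "{X \<in> \<I>'. card X = k} \<subseteq> \<psi> ` {X \<in> \<I>. card X = k}"
      proof
        fix Y assume Y: "Y \<in> {X \<in> \<I>'. card X = k}"
        hence "Y \<in> \<psi> ` \<I>" using imI by simp
        then obtain X where "X \<in> \<I>" "Y = \<psi> X" by auto
        thus "Y \<in> \<psi> ` {X \<in> \<I>. card X = k}" using Y psi(2) by auto
      qed
    qed
    have "card (\<psi> ` {X \<in> \<I>. card X = k}) = card {X \<in> \<I>. card X = k}"
      by (rule card_image[OF inj])
    thus ?thesis using im by simp
  qed
  have "\<forall>j. j \<le> r \<longrightarrow> card {B \<in> bases r \<I>. card (a B) = j} = card {B \<in> bases r \<I>'. card (a' B) = j}"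
  proof (rule triangular)
    fix j assume j: "j \<le> r"
    hence jj: "r - (r - j) = j" "r - j \<le> r" by auto
    show "(\<Sum>i\<in>{..r}. card {B \<in> bases r \<I>. card (a B) = i} * (i choose j)) =
          (\<Sum>i\<in>{..r}. card {B \<in> bases r \<I>'. card (a' B) = i} * (i choose j))"
      using fvec[OF assms(1) assms(5) jj(2)] fvec[OF assms(2) assms(6) jj(2)] F[of "r - j"]
      unfolding jj(1) by simp
  qed
  thus ?thesis unfolding activity_vector_def by (auto intro: map_cong)
qed

end
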